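(* Let $g,r,d$ and ramification sequences $\alpha,\beta$ satisfy $\rho(g,r,d,\alpha,\beta)=0$. If $r\ge2$ and $\alpha_r+\beta_r+g-d+r>r+1$, then there is a non-identity element of the EH group (one of the generators $\pi_{t,a}$) which moves at most $\tfrac14$ of the elements of $YT(g,r,d,\alpha,\beta)$.
   Context: Ramification sequences: $\alpha=(\alpha_0,\dots,\alpha_r)$ integers with $d-r\ge\alpha_0\ge\cdots\ge\alpha_r\ge0$, $|\alpha|=\sum\alpha_i$; $g-d+r\ge0$; $\rho(g,r,d,\alpha,\beta)=g-(r+1)(g-d+r)-|\alpha|-|\beta|$. Skew diagram $\sigma(g,r,d,\alpha,\beta)$ (with $m=g-d+r$): rows $k=1,\dots,r+1$ numbered top to bottom, row $k$ consisting of boxes $(k,c)$ with $\alpha_0-\alpha_{r+1-k}<c\le\alpha_0+m+\beta_{k-1}$ (columns numbered left to right); it has $g$ boxes when $\rho=0$. $YT(g,r,d,\alpha,\beta)$ is the set of standard Young tableaux of this shape: bijective fillings with $1,\dots,g$ strictly increasing along rows (left to right) and columns (top to bottom). The distance between boxes $(i,j),(i',j')$ is $|i-i'|+|j-j'|$. For $1\le t<g$ and $a>0$, $\pi_{t,a}$ is the permutation of $YT(g,r,d,\alpha,\beta)$ exchanging the entries $t$ and $t+1$ in every tableau where they lie in different rows and different columns at distance exactly $a$, and fixing all other tableaux. The EH group is the subgroup of the symmetric group on $YT(g,r,d,\alpha,\beta)$ generated by all $\pi_{t,a}$. An element moves a tableau if it does not fix it. *)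

theory Defs
  imports Main
begin

type_synonym box = "nat \<times> int"
type_synonym tableau = "box \<Rightarrow> nat"

definition is_ram_seq :: "nat \<Rightarrow> nat \<Rightarrow> (nat \<Rightarrow> nat) \<Rightarrow> bool" where
  "is_ram_seq r d \<alpha> \<longleftrightarrow>
     int (\<alpha> 0) \<le> int d - int r \<and> (\<forall>i<r. \<alpha> (Suc i) \<le> \<alpha> i)"

definition rho :: "nat \<Rightarrow> nat \<Rightarrow> nat \<Rightarrow> (nat \<Rightarrow> nat) \<Rightarrow> (nat \<Rightarrow> nat) \<Rightarrow> int" where
  "rho g r d \<alpha> \<beta> = int g - (int r + 1) * (int g - int d + int r)
      - int (\<Sum>i\<le>r. \<alpha> i) - int (\<Sum>i\<le>r. \<beta> i)"

definition skew :: "nat \<Rightarrow> nat \<Rightarrow> nat \<Rightarrow> (nat \<Rightarrow> nat) \<Rightarrow> (nat \<Rightarrow> nat) \<Rightarrow> box set" where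
  "skew g r d \<alpha> \<beta> = {(k, c). 1 \<le> k \<and> k \<le> r + 1 \<and>
      int (\<alpha> 0) - int (\<alpha> (r + 1 - k)) < c \<and>
      c \<le> int (\<alpha> 0) + (int g - int d + int r) + int (\<beta> (k - 1))}"

definition YT :: "nat \<Rightarrow> nat \<Rightarrow> nat \<Rightarrow> (nat \<Rightarrow> nat) \<Rightarrow> (nat \<Rightarrow> nat) \<Rightarrow> tableau set" where
  "YT g r d \<alpha> \<beta> = {T. let S = skew g r d \<alpha> \<beta> in
      bij_betw T S {1..g} \<and> (\<forall>x. x \<notin> S \<longrightarrow> T x = 0) \<and>
      (\<forall>i j j'. (i, j) \<in> S \<longrightarrow> (i, j') \<in> S \<longrightarrow> j < j' \<longrightarrow> T (i, j) < T (i, j')) \<and>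
      (\<forall>i i' j. (i, j) \<in> S \<longrightarrow> (i', j) \<in> S \<longrightarrow> i < i' \<longrightarrow> T (i, j) < T (i', j))}"

definition box_dist :: "box \<Rightarrow> box \<Rightarrow> int" where
  "box_dist p q = \<bar>int (fst p) - int (fst q)\<bar> + \<bar>snd p - snd q\<bar>"

definition pi_ta :: "nat \<Rightarrow> int \<Rightarrow> tableau \<Rightarrow> tableau" where
  "pi_ta t a T = (if (\<exists>p q. T p = t \<and> T q = t + 1 \<and> fst p \<noteq> fst q \<and> snd p \<noteq> snd q
                          \<and> box_dist p q = a)
     then (\<lambda>x. if T x = t then t + 1 else if T x = t + 1 then t else T x) else T)"

text \<open>EH group: generated by the pi_{t,a} (1 <= t < g, a > 0). As the ambient group is finite,
  the generated subgroup is the closure of the identity under composition with generators.\<close>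
inductive_set EH_group :: "nat \<Rightarrow> (tableau \<Rightarrow> tableau) set" for g :: nat where
  EH_id: "id \<in> EH_group g"
| EH_step: "\<sigma> \<in> EH_group g \<Longrightarrow> 1 \<le> t \<Longrightarrow> t < g \<Longrightarrow> a > 0 \<Longrightarrow> pi_ta t a \<circ> \<sigma> \<in> EH_group g"

end

theory Submission
  imports Defs "HOL-Library.Product_Lexorder" "HOL-Library.FuncSet"
begin


lemma rank_props:
  fixes S :: "'a set" and key :: "'a \<Rightarrow> 'k::linorder"
  assumes fin: "finite S" and inj: "inj_on key S"
  defines "rk \<equiv> (\<lambda>x. if x \<in> S then card {y\<in>S. key y \<le> key x} else 0)"
  shows "\<And>x y. x \<in> S \<Longrightarrow> y \<in> S \<Longrightarrow> key x < key y \<Longrightarrow> rk x < rk y"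
    and "bij_betw rk S {1..card S}"
    and "\<And>x. x \<notin> S \<Longrightarrow> rk x = 0"
proof -
  show mono: "\<And>x y. x \<in> S \<Longrightarrow> y \<in> S \<Longrightarrow> key x < key y \<Longrightarrow> rk x < rk y"
  proof -
    fix x y assume xy: "x \<in> S" "y \<in> S" "key x < key y"
    have "{z\<in>S. key z \<le> key x} \<subseteq> {z\<in>S. key z \<le> key y}"
      using xy by auto
    moreover have "y \<in> {z\<in>S. key z \<le> key y} - {z\<in>S. key z \<le> key x}"
      using xy by auto
    ultimately have "{z\<in>S. key z \<le> key x} \<subset> {z\<in>S. key z \<le> key y}"
      by blast
    then show "rk x < rk y" using xy fin unfolding rk_def
      by (simp add: psubset_card_mono)
  qed
  show "\<And>x. x \<notin> S \<Longrightarrow> rk x = 0" by (simp add: rk_def)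
  have inj2: "inj_on rk S"
  proof (rule inj_onI)
    fix x y assume xy: "x \<in> S" "y \<in> S" "rk x = rk y"
    show "x = y"
    proof (rule ccontr)
      assume "x \<noteq> y"
      then have "key x \<noteq> key y" using inj xy by (meson inj_on_def)
      then have "key x < key y \<or> key y < key x" by auto
      then show False using mono xy by fastforce
    qed
  qed
  have sub: "rk ` S \<subseteq> {1..card S}"
  proof
    fix z assume "z \<in> rk ` S"
    then obtain x where x: "x \<in> S" "z = rk x" by auto
    have "x \<in> {y\<in>S. key y \<le> key x}" using x by auto
    then have "card {y\<in>S. key y \<le> key x} \<ge> 1" using fin
      by (metis (no_types, lifting) One_nat_def Suc_leI card_gt_0_iff empty_iff finite_subset mem_Collect_eq subsetI)
    moreover have "card {y\<in>S. key y \<le> key x} \<le> card S" using fin by (simp add: card_mono)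
    ultimately show "z \<in> {1..card S}" using x by (simp add: rk_def)
  qed
  have "card (rk ` S) = card {1..card S}" using inj2 by (simp add: card_image)
  then have "rk ` S = {1..card S}" using sub by (simp add: card_subset_eq)
  then show "bij_betw rk S {1..card S}" using inj2 by (simp add: bij_betw_def)
qed

lemma four_pick:
  fixes A :: "nat \<Rightarrow> 'a set"
  assumes fin: "finite Y" and sub: "\<And>i. i < 4 \<Longrightarrow> A i \<subseteq> Y"
    and disj: "\<And>i j. i < 4 \<Longrightarrow> j < 4 \<Longrightarrow> i \<noteq> j \<Longrightarrow> A i \<inter> A j = {}"
  shows "\<exists>i<4. 4 * card (A i) \<le> card Y"
proof (rule ccontr)
  assume "\<not> ?thesis"
  then have big: "\<And>i. i < 4 \<Longrightarrow> card Y < 4 * card (A i)" by auto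
  have finA: "\<And>i. i < 4 \<Longrightarrow> finite (A i)" using sub fin finite_subset by blast
  have "card (\<Union>i\<in>{..<4}. A i) = (\<Sum>i<4. card (A i))"
    by (rule card_UN_disjoint) (use finA disj in auto)
  moreover have "card (\<Union>i\<in>{..<4}. A i) \<le> card Y"
    using sub fin by (intro card_mono) auto
  moreover have "4 * card Y < 4 * (\<Sum>i<4. card (A i))"
  proof -
    have "(\<Sum>i::nat<4. card Y) < (\<Sum>i::nat<4. 4 * card (A i))"
      by (rule sum_strict_mono) (use big in \<open>auto simp: lessThan_empty_iff\<close>)
    then show ?thesis by (simp add: sum_distrib_left)
  qed
  ultimately show False by linarith
qed

lemma moved_wit:
  assumes "pi_ta t a T \<noteq> T"
  shows "\<exists>p q. T p = t \<and> T q = t + 1 \<and> fst p \<noteq> fst q \<and> snd p \<noteq> snd q \<and> box_dist p q = a"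
  using assms unfolding pi_ta_def by (auto split: if_splits)

lemma moved_intro:
  assumes "T p = t" "T q = t + 1" "fst p \<noteq> fst q" "snd p \<noteq> snd q" "box_dist p q = a"
  shows "pi_ta t a T \<noteq> T"
proof -
  have c: "\<exists>p q. T p = t \<and> T q = t + 1 \<and> fst p \<noteq> fst q \<and> snd p \<noteq> snd q \<and> box_dist p q = a"
    using assms by blast
  have "pi_ta t a T p = t + 1" unfolding pi_ta_def if_P[OF c] using assms(1) by simp
  then show ?thesis using assms(1) by auto
qed

lemma pi_in_EH: "1 \<le> t \<Longrightarrow> t < g \<Longrightarrow> a > 0 \<Longrightarrow> pi_ta t a \<in> EH_group g"
  using EH_group.EH_step[OF EH_group.EH_id] by fastforce



lemma YT_finite:
  assumes "finite (skew g r d \<alpha> \<beta>)"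
  shows "finite (YT g r d \<alpha> \<beta>)"
proof -
  let ?S = "skew g r d \<alpha> \<beta>"
  have "YT g r d \<alpha> \<beta> \<subseteq> (\<lambda>f x. if x \<in> ?S then f x else 0) ` (PiE ?S (\<lambda>_. {0..g}))"
  proof
    fix T assume T: "T \<in> YT g r d \<alpha> \<beta>"
    then have b: "bij_betw T ?S {1..g}" and z: "\<forall>x. x \<notin> ?S \<longrightarrow> T x = 0"
      unfolding YT_def Let_def by auto
    have "restrict T ?S \<in> PiE ?S (\<lambda>_. {0..g})"
      using bij_betwE[OF b] by (auto simp: PiE_iff)
    moreover have "T = (\<lambda>x. if x \<in> ?S then restrict T ?S x else 0)"
      using z by auto
    ultimately show "T \<in> (\<lambda>f x. if x \<in> ?S then f x else 0) ` (PiE ?S (\<lambda>_. {0..g}))"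
      by blast
  qed
  moreover have "finite (PiE ?S (\<lambda>_. {0..g}))" using assms by (simp add: finite_PiE)
  ultimately show ?thesis using finite_subset by blast
qed

lemma YT_inj:
  assumes "T \<in> YT g r d \<alpha> \<beta>" "T p = T q" "T p \<ge> 1"
  shows "p = q"
proof -
  let ?S = "skew g r d \<alpha> \<beta>"
  have b: "bij_betw T ?S {1..g}" and z: "\<forall>x. x \<notin> ?S \<longrightarrow> T x = 0"
    using assms(1) unfolding YT_def Let_def by auto
  have "p \<in> ?S" "q \<in> ?S" using z assms(2,3) by (metis not_one_le_zero)+
  then show ?thesis using b assms(2) by (meson bij_betw_imp_inj_on inj_onD)
qed

lemma disj_fixed_t:
  assumes "T \<in> YT g r d \<alpha> \<beta>" "t \<ge> 1" "pi_ta t a T \<noteq> T" "pi_ta t a' T \<noteq> T"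
  shows "a = a'"
proof -
  obtain p q where pq: "T p = t" "T q = t + 1" "box_dist p q = a" using moved_wit[OF assms(3)] by blast
  obtain p' q' where pq': "T p' = t" "T q' = t + 1" "box_dist p' q' = a'" using moved_wit[OF assms(4)] by blast
  have "p = p'" using YT_inj[OF assms(1), of p p'] pq pq' assms(2) by simp
  moreover have "q = q'" using YT_inj[OF assms(1), of q q'] pq pq' assms(2) by simp
  ultimately show ?thesis using pq pq' by simp
qed

lemma finish:
  fixes t :: "nat \<Rightarrow> nat" and a :: "nat \<Rightarrow> int"
  assumes fin: "finite (YT g r d \<alpha> \<beta>)"
    and ok: "\<And>i. i < 4 \<Longrightarrow> 1 \<le> t i \<and> t i < g \<and> a i > 0 \<and> (\<exists>T \<in> YT g r d \<alpha> \<beta>. pi_ta (t i) (a i) T \<noteq> T)"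
    and dj: "\<And>i j T. i < 4 \<Longrightarrow> j < 4 \<Longrightarrow> i \<noteq> j \<Longrightarrow> T \<in> YT g r d \<alpha> \<beta> \<Longrightarrow>
              pi_ta (t i) (a i) T \<noteq> T \<Longrightarrow> pi_ta (t j) (a j) T \<noteq> T \<Longrightarrow> False"
  shows "\<exists>t a. 1 \<le> t \<and> t < g \<and> a > 0 \<and> pi_ta t a \<in> EH_group g \<and>
           (\<exists>T \<in> YT g r d \<alpha> \<beta>. pi_ta t a T \<noteq> T) \<and>
           4 * card {T \<in> YT g r d \<alpha> \<beta>. pi_ta t a T \<noteq> T} \<le> card (YT g r d \<alpha> \<beta>)"
proof -
  let ?A = "\<lambda>i. {T \<in> YT g r d \<alpha> \<beta>. pi_ta (t i) (a i) T \<noteq> T}"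
  obtain i where i: "i < 4" "4 * card (?A i) \<le> card (YT g r d \<alpha> \<beta>)"
    using four_pick[OF fin, of ?A] dj by blast
  show ?thesis
    apply (rule exI[of _ "t i"], rule exI[of _ "a i"])
    using ok[OF i(1)] i(2) pi_in_EH by blast
qed



locale shp =
  fixes g r d :: nat and \<alpha> \<beta> :: "nat \<Rightarrow> nat"
  assumes ra: "is_ram_seq r d \<alpha>" and rb: "is_ram_seq r d \<beta>"
    and mnn: "int g - int d + int r \<ge> 0"
    and rho0: "rho g r d \<alpha> \<beta> = 0"
    and r2: "r \<ge> 2"
    and bigc: "int (\<alpha> r) + int (\<beta> r) + int g - int d + int r > int r + 1"
begin

definition "m = int g - int d + int r"
definition "L k = int (\<alpha> 0) - int (\<alpha> (r + 1 - k))"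
definition "R k = int (\<alpha> 0) + m + int (\<beta> (k - 1))"
abbreviation "S \<equiv> skew g r d \<alpha> \<beta>"

lemma S_eq: "S = {(k, c). 1 \<le> k \<and> k \<le> r + 1 \<and> L k < c \<and> c \<le> R k}"
  unfolding skew_def L_def R_def m_def by simp

lemma mono_gen:
  assumes "is_ram_seq r d f" "i \<le> j" "j \<le> r"
  shows "f j \<le> f i"
  using assms(2,3)
proof (induction j rule: dec_induct)
  case base then show ?case by simp
next
  case (step n)
  then have "f (Suc n) \<le> f n" using assms(1) unfolding is_ram_seq_def by auto
  then show ?case using step by simp
qed

lemma amono: "i \<le> j \<Longrightarrow> j \<le> r \<Longrightarrow> \<alpha> j \<le> \<alpha> i" using mono_gen[OF ra] .
lemma bmono: "i \<le> j \<Longrightarrow> j \<le> r \<Longrightarrow> \<beta> j \<le> \<beta> i" using mono_gen[OF rb] .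

lemma rowlen: "1 \<le> k \<Longrightarrow> k \<le> r + 1 \<Longrightarrow> R k - L k \<ge> int r + 2"
proof -
  assume k: "1 \<le> k" "k \<le> r + 1"
  have "\<alpha> r \<le> \<alpha> (r + 1 - k)" using amono k by simp
  moreover have "\<beta> r \<le> \<beta> (k - 1)" using bmono k by simp
  ultimately show ?thesis using bigc unfolding R_def L_def m_def by linarith
qed

lemma Lnn: "1 \<le> k \<Longrightarrow> L k \<ge> 0"
  unfolding L_def using amono[of 0 "r + 1 - k"] by simp

lemma Rle: "1 \<le> k \<Longrightarrow> k \<le> r + 1 \<Longrightarrow> R k \<le> R 1"
  unfolding R_def using bmono[of 0 "k - 1"] by simp

lemma Lr1: "L (r + 1) = 0" unfolding L_def by simp

lemma boxS: "(k, c) \<in> S \<Longrightarrow> 1 \<le> k \<and> k \<le> r + 1 \<and> 1 \<le> c \<and> c \<le> R 1"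
  using S_eq Lnn Rle by fastforce

lemma S_union: "S = (\<Union>k\<in>{1..r+1}. {k} \<times> {L k<..R k})"
  unfolding S_eq by auto

lemma finS: "finite S"
  unfolding S_union by auto

lemma cardS: "card S = g"
proof -
  have "card S = (\<Sum>k\<in>{1..r+1}. card ({k} \<times> {L k<..R k}))"
    unfolding S_union by (rule card_UN_disjoint) auto
  also have "\<dots> = (\<Sum>k\<in>{1..r+1}. nat (R k - L k))"
    by (simp add: card_cartesian_product_singleton)
  finally have "int (card S) = (\<Sum>k\<in>{1..r+1}. int (nat (R k - L k)))" by simp
  also have "\<dots> = (\<Sum>k\<in>{1..r+1}. m + int (\<beta> (k - 1)) + int (\<alpha> (r + 1 - k)))"
  proof (rule sum.cong)
    fix k assume "k \<in> {1..r+1}"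
    then have "R k - L k \<ge> 0" using rowlen[of k] by auto
    then show "int (nat (R k - L k)) = m + int (\<beta> (k - 1)) + int (\<alpha> (r + 1 - k))"
      unfolding R_def L_def by simp
  qed simp
  also have "\<dots> = (\<Sum>k\<in>{1..r+1}. m) + (\<Sum>k\<in>{1..r+1}. int (\<beta> (k - 1))) + (\<Sum>k\<in>{1..r+1}. int (\<alpha> (r + 1 - k)))"
    by (simp add: sum.distrib)
  also have "(\<Sum>k\<in>{1..r+1}. int (\<beta> (k - 1))) = (\<Sum>i\<le>r. int (\<beta> i))"
    by (rule sum.reindex_bij_witness[of _ "\<lambda>i. i + 1" "\<lambda>k. k - 1"]) auto
  also have "(\<Sum>k\<in>{1..r+1}. int (\<alpha> (r + 1 - k))) = (\<Sum>i\<le>r. int (\<alpha> i))"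
    by (rule sum.reindex_bij_witness[of _ "\<lambda>i. r + 1 - i" "\<lambda>k. r + 1 - k"]) auto
  finally have "int (card S) = (int r + 1) * m + (\<Sum>i\<le>r. int (\<beta> i)) + (\<Sum>i\<le>r. int (\<alpha> i))"
    by simp
  moreover have "int g = (int r + 1) * m + int (\<Sum>i\<le>r. \<alpha> i) + int (\<Sum>i\<le>r. \<beta> i)"
    using rho0 unfolding rho_def m_def by linarith
  ultimately show ?thesis by simp
qed


lemma rank_YT:
  fixes key :: "box \<Rightarrow> 'k::linorder"
  assumes inj: "inj_on key S"
    and rowc: "\<And>i j j'. (i, j) \<in> S \<Longrightarrow> (i, j') \<in> S \<Longrightarrow> j < j' \<Longrightarrow> key (i, j) < key (i, j')"
    and colc: "\<And>i i' j. (i, j) \<in> S \<Longrightarrow> (i', j) \<in> S \<Longrightarrow> i < i' \<Longrightarrow> key (i, j) < key (i', j)"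
  shows "(\<lambda>x. if x \<in> S then card {y\<in>S. key y \<le> key x} else 0) \<in> YT g r d \<alpha> \<beta>"
proof -
  note rp = rank_props[OF finS inj]
  show ?thesis unfolding YT_def Let_def
    using rp(2) rp(1) rp(3) rowc colc cardS by simp
qed

definition grp :: "int \<Rightarrow> box \<Rightarrow> nat" where
  "grp b x = (if fst x = 1 \<and> snd x = R 1 then 1 else if fst x = r + 1 \<and> snd x = 1 then 2
     else if fst x = 1 \<or> (snd x = 1 \<and> fst x \<le> r) \<or> (fst x = 2 \<and> snd x \<le> b) then 0 else 3)"

definition key :: "int \<Rightarrow> box \<Rightarrow> nat \<times> nat \<times> int" where
  "key b x = (grp b x, fst x, snd x)"

definition tab :: "int \<Rightarrow> tableau" where
  "tab b = (\<lambda>x. if x \<in> S then card {y\<in>S. key b y \<le> key b x} else 0)"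

lemma R1ge: "R 1 \<ge> 4"
  using rowlen[of 1] Lnn[of 1] r2 by simp

lemma grp_first: "grp b (1, c) = (if c = R 1 then 1 else 0)"
  using r2 unfolding grp_def by simp

lemma grp_last: "grp b (r + 1, c) = (if c = 1 then 2 else 3)"
  using r2 unfolding grp_def by simp

lemma grp_first': "grp b (Suc 0, c) = (if c = R (Suc 0) then 1 else 0)"
  using grp_first[of b c] by simp

lemma grp_last': "grp b (Suc r, c) = (if c = 1 then 2 else 3)"
  using grp_last[of b c] by simp

lemma grp_mid: "2 \<le> k \<Longrightarrow> k \<le> r \<Longrightarrow> grp b (k, c) = (if c = 1 \<or> (k = 2 \<and> c \<le> b) then 0 else 3)"
  unfolding grp_def by simp

lemma grp_row:
  assumes "b < R 1" "(i, j) \<in> S" "(i, j') \<in> S" "j < j'"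
  shows "grp b (i, j) \<le> grp b (i, j')"
proof -
  have i: "1 \<le> i" "i \<le> r + 1" "1 \<le> j" "j' \<le> R 1" using boxS[OF assms(2)] boxS[OF assms(3)] by auto
  consider "i = 1" | "i = r + 1" | "2 \<le> i \<and> i \<le> r" using i by linarith
  then show ?thesis
  proof cases
    case 1 then show ?thesis using assms(4) i by (simp add: grp_first grp_first')
  next
    case 2 then show ?thesis using assms(4) i by (simp add: grp_last grp_last')
  next
    case 3 then show ?thesis using assms(4) i by (simp add: grp_mid)
  qed
qed

lemma grp_col:
  assumes "b < R 1" "(i, j) \<in> S" "(i', j) \<in> S" "i < i'"
  shows "grp b (i, j) \<le> grp b (i', j)"
proof -
  have i: "1 \<le> i" "i' \<le> r + 1" "1 \<le> j" "j \<le> R 1" using boxS[OF assms(2)] boxS[OF assms(3)] by auto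
  have R4: "R 1 \<ge> 4" by (rule R1ge)
  consider "i = 1" | "2 \<le> i \<and> i \<le> r" | "i = r + 1" using i assms(4) by linarith
  then show ?thesis
  proof cases
    case 1
    consider "i' = r + 1" | "2 \<le> i' \<and> i' \<le> r" using assms(4) i 1 by linarith
    then show ?thesis
    proof cases
      case a: 1 then show ?thesis using 1 R4 assms(1) by (simp add: grp_first grp_first' grp_last grp_last')
    next
      case a: 2 then show ?thesis using 1 R4 assms(1) by (simp add: grp_first grp_first' grp_mid)
    qed
  next
    case 2
    consider "i' = r + 1" | "2 \<le> i' \<and> i' \<le> r" using assms(4) i 2 by linarith
    then show ?thesis
    proof cases
      case a: 1 then show ?thesis using 2 by (simp add: grp_mid grp_last grp_last')
    next
      case a: 2 then show ?thesis using 2 assms(4) by (simp add: grp_mid)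
    qed
  next
    case 3 then show ?thesis using assms(4) i by simp
  qed
qed

lemma tab_YT:
  assumes "b < R 1"
  shows "tab b \<in> YT g r d \<alpha> \<beta>"
  unfolding tab_def
proof (rule rank_YT)
  show "inj_on (key b) S" by (rule inj_onI) (auto simp: key_def)
  fix i j j' assume "(i, j) \<in> S" "(i, j') \<in> S" "j < j'"
  then show "key b (i, j) < key b (i, j')"
    using grp_row[OF assms, of i j j'] unfolding key_def by (auto simp: less_le)
next
  fix i i' j assume "(i, j) \<in> S" "(i', j) \<in> S" "i < i'"
  then show "key b (i, j) < key b (i', j)"
    using grp_col[OF assms, of i j i'] unfolding key_def by (auto simp: less_le)
qed


abbreviation "Pb \<equiv> (1::nat, R 1)"
abbreviation "Qb \<equiv> (r + 1, 1::int)"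
lemma P_in: "Pb \<in> S" using rowlen[of 1] unfolding S_eq by auto
lemma Q_in: "Qb \<in> S" using rowlen[of "r+1"] Lr1 unfolding S_eq by auto

lemma grpP: "grp b Pb = 1" unfolding grp_def by simp
lemma grpQ: "grp b Qb = 2" by (simp add: grp_last grp_last')
lemma grp_cases:
  assumes "(k, c) \<in> S"
  shows "(k = 1 \<and> grp b (k, c) = (if c = R 1 then 1 else 0)) \<or>
         (k = r + 1 \<and> grp b (k, c) = (if c = 1 then 2 else 3)) \<or>
         (2 \<le> k \<and> k \<le> r \<and> grp b (k, c) = (if c = 1 \<or> (k = 2 \<and> c \<le> b) then 0 else 3))"
proof -
  have "1 \<le> k" "k \<le> r + 1" using boxS[OF assms] by auto
  then consider "k = 1" | "k = r + 1" | "2 \<le> k \<and> k \<le> r" by linarith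
  then show ?thesis
  proof cases
    case 1 then show ?thesis using grp_first[of b c] by simp
  next
    case 2 then show ?thesis using grp_last[of b c] by simp
  next
    case 3 then show ?thesis using grp_mid[of k b c] by simp
  qed
qed

lemma grp1: "y \<in> S \<Longrightarrow> grp b y = 1 \<Longrightarrow> y = Pb"
proof -
  assume a: "y \<in> S" "grp b y = 1"
  obtain k c where y: "y = (k, c)" by (cases y)
  show "y = Pb" using grp_cases[of k c b] a y by (auto split: if_split_asm)
qed

lemma grp2: "y \<in> S \<Longrightarrow> grp b y = 2 \<Longrightarrow> y = Qb"
proof -
  assume a: "y \<in> S" "grp b y = 2"
  obtain k c where y: "y = (k, c)" by (cases y)
  show "y = Qb" using grp_cases[of k c b] a y by (auto split: if_split_asm)
qed

definition "G0 b = {y\<in>S. grp b y = 0}"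

lemma G0_mono:
  assumes "b \<le> b'" shows "G0 b \<subseteq> G0 b'"
proof
  fix y assume "y \<in> G0 b"
  then have a: "y \<in> S" "grp b y = 0" unfolding G0_def by auto
  obtain k c where y: "y = (k, c)" by (cases y)
  have "grp b' y = 0" using grp_cases[of k c b] grp_cases[of k c b'] a y assms r2
    by (auto split: if_split_asm)
  then show "y \<in> G0 b'" using a unfolding G0_def by simp
qed

lemma tabP: "tab b Pb = card (G0 b) + 1"
proof -
  have "{y\<in>S. key b y \<le> key b Pb} = insert Pb (G0 b)"
  proof (intro equalityI subsetI)
    fix y assume y: "y \<in> {y\<in>S. key b y \<le> key b Pb}"
    then have "grp b y < 1 \<or> grp b y = 1" unfolding key_def grpP by (auto simp: grpP)
    then show "y \<in> insert Pb (G0 b)" using y grp1[of y b] unfolding G0_def by auto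
  next
    fix y assume "y \<in> insert Pb (G0 b)"
    then have "y = Pb \<or> (y \<in> S \<and> grp b y = 0)" unfolding G0_def by auto
    then show "y \<in> {y\<in>S. key b y \<le> key b Pb}"
    proof
      assume "y = Pb" then show ?thesis using P_in by simp
    next
      assume a: "y \<in> S \<and> grp b y = 0"
      have "key b y \<le> key b Pb" unfolding key_def grpP using a by simp
      then show ?thesis using a by simp
    qed
  qed
  moreover have "Pb \<notin> G0 b" unfolding G0_def using grpP by simp
  moreover have "finite (G0 b)" unfolding G0_def using finS by simp
  ultimately show ?thesis unfolding tab_def using P_in by simp
qed

lemma tabQ: "tab b Qb = card (G0 b) + 2"
proof -
  have "{y\<in>S. key b y \<le> key b Qb} = insert Qb (insert Pb (G0 b))"
  proof (intro equalityI subsetI)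
    fix y assume y: "y \<in> {y\<in>S. key b y \<le> key b Qb}"
    then have "grp b y < 1 \<or> grp b y = 1 \<or> grp b y = 2" unfolding key_def grpQ by (auto simp: grpQ)
    then show "y \<in> insert Qb (insert Pb (G0 b))" using y grp1[of y b] grp2[of y b] unfolding G0_def by auto
  next
    fix y assume "y \<in> insert Qb (insert Pb (G0 b))"
    then have "y = Qb \<or> y = Pb \<or> (y \<in> S \<and> grp b y = 0)" unfolding G0_def by auto
    then show "y \<in> {y\<in>S. key b y \<le> key b Qb}"
    proof (elim disjE)
      assume "y = Qb" then show ?thesis using Q_in by simp
    next
      assume "y = Pb"
      have "key b Pb \<le> key b Qb" unfolding key_def grpQ grpP by simp
      then show ?thesis using P_in \<open>y = Pb\<close> by simp
    next
      assume a: "y \<in> S \<and> grp b y = 0"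
      have "key b y \<le> key b Qb" unfolding key_def grpQ using a by simp
      then show ?thesis using a by simp
    qed
  qed
  moreover have "Pb \<notin> G0 b" "Qb \<notin> G0 b" unfolding G0_def using grpP grpQ by simp_all
  moreover have "Pb \<noteq> Qb" using r2 by simp
  moreover have "finite (G0 b)" unfolding G0_def using finS by simp
  ultimately show ?thesis unfolding tab_def using Q_in by simp
qed

definition "Dd = int r + R 1 - 1"

lemma tab_moved: "pi_ta (card (G0 b) + 1) Dd (tab b) \<noteq> tab b"
proof (rule moved_intro[of _ Pb _ Qb])
  show "tab b Pb = card (G0 b) + 1" by (rule tabP)
  show "tab b Qb = card (G0 b) + 1 + 1" using tabQ[of b] by simp
  show "fst Pb \<noteq> fst Qb" using r2 by simp
  show "snd Pb \<noteq> snd Qb" using R1ge by simp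
  show "box_dist Pb Qb = Dd" unfolding box_dist_def Dd_def using R1ge by simp
qed

lemma D_disj:
  assumes T: "T \<in> YT g r d \<alpha> \<beta>" and t1: "t \<ge> 1" "t' \<ge> 1" and m1: "pi_ta t Dd T \<noteq> T" and m2: "pi_ta t' Dd T \<noteq> T"
  shows "t = t'"
proof -
  have b: "bij_betw T S {1..g}" and z: "\<forall>x. x \<notin> S \<longrightarrow> T x = 0"
    and rw: "\<And>i j j'. (i, j) \<in> S \<Longrightarrow> (i, j') \<in> S \<Longrightarrow> j < j' \<Longrightarrow> T (i, j) < T (i, j')"
    and cl: "\<And>i i' j. (i, j) \<in> S \<Longrightarrow> (i', j) \<in> S \<Longrightarrow> i < i' \<Longrightarrow> T (i, j) < T (i', j)"
    using T unfolding YT_def Let_def by auto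
  have key: "t = min (T Pb) (T Qb)" if m: "pi_ta t Dd T \<noteq> T" and tt: "t \<ge> 1" for t
  proof -
    obtain p q where pq: "T p = t" "T q = t + 1" "fst p \<noteq> fst q" "snd p \<noteq> snd q" "box_dist p q = Dd"
      using moved_wit[OF m] by blast
    have "p \<in> S" using z pq(1) tt by (metis not_one_le_zero)
    moreover have "q \<in> S" using z pq(2) by (metis add_is_0 one_neq_zero)
    ultimately obtain k c k' c' where kc: "p = (k, c)" "q = (k', c')"
      "1 \<le> k" "k \<le> r + 1" "1 \<le> c" "c \<le> R 1" "1 \<le> k'" "k' \<le> r + 1" "1 \<le> c'" "c' \<le> R 1"
      using boxS by (metis prod.exhaust)
    have dd: "\<bar>int k - int k'\<bar> + \<bar>c - c'\<bar> = int r + R 1 - 1"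
      using pq(5) kc unfolding box_dist_def Dd_def by simp
    have A: "\<bar>int k - int k'\<bar> = int r" and B: "\<bar>c - c'\<bar> = R 1 - 1"
      using dd kc by linarith+
    have kk: "(k = 1 \<and> k' = r + 1) \<or> (k = r + 1 \<and> k' = 1)" using A kc by linarith
    have cc: "(c = 1 \<and> c' = R 1) \<or> (c = R 1 \<and> c' = 1)" using B kc by linarith
    have P1: "(1, 1) \<in> S \<Longrightarrow> (r + 1, R 1) \<in> S \<Longrightarrow> T (1, 1) + 2 \<le> T (r + 1, R 1)"
    proof -
      assume a1: "(1, 1) \<in> S" and a2: "(r + 1, R 1) \<in> S"
      have "T (1, 1) < T (1, R 1)" using rw[OF a1 P_in] R1ge by simp
      moreover have "T (1, R 1) < T (r + 1, R 1)" using cl[OF P_in a2] r2 by simp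
      ultimately show ?thesis by simp
    qed
    from kk cc show ?thesis
    proof (elim disjE conjE)
      assume e: "k = 1" "k' = r + 1" "c = 1" "c' = R 1"
      then have "(1, 1) \<in> S" "(r + 1, R 1) \<in> S" using kc(1,2) \<open>p \<in> S\<close> \<open>q \<in> S\<close> by auto
      then have "T (1, 1) + 2 \<le> T (r + 1, R 1)" by (rule P1)
      moreover have "T (1, 1) = t" "T (r + 1, R 1) = t + 1" using pq(1,2) kc(1,2) e by auto
      ultimately show ?thesis by simp
    next
      assume e: "k = r + 1" "k' = 1" "c = R 1" "c' = 1"
      then have "(1, 1) \<in> S" "(r + 1, R 1) \<in> S" using kc(1,2) \<open>p \<in> S\<close> \<open>q \<in> S\<close> by auto
      then have "T (1, 1) + 2 \<le> T (r + 1, R 1)" by (rule P1)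
      moreover have "T (1, 1) = t + 1" "T (r + 1, R 1) = t" using pq(1,2) kc(1,2) e by auto
      ultimately show ?thesis by simp
    next
      assume e: "k = 1" "k' = r + 1" "c = R 1" "c' = 1"
      have "T Pb = t" "T Qb = t + 1" using pq(1,2) kc(1,2) e by auto
      then show ?thesis by simp
    next
      assume e: "k = r + 1" "k' = 1" "c = 1" "c' = R 1"
      have "T Qb = t" "T Pb = t + 1" using pq(1,2) kc(1,2) e by auto
      then show ?thesis by simp
    qed
  qed
  show ?thesis using key[OF m1 t1(1)] key[OF m2 t1(2)] by simp
qed

end



definition RS :: "box set" where "RS = {1,2,3} \<times> {1,2,3,4}"

definition tb :: "nat list list \<Rightarrow> tableau" where
  "tb xs = (\<lambda>(k, c). if (k, c) \<in> RS then xs ! (k - 1) ! (nat c - 1) else 0)"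

lemma RS_expl: "RS = {(1,1),(1,2),(1,3),(1,4),(2,1),(2,2),(2,3),(2,4),(3,1),(3,2),(3,3),(3,4)}"
  unfolding RS_def by auto

lemma tb_YT:
  assumes S: "skew g r d \<alpha> \<beta> = RS" and g: "g = 12"
    and xs: "xs \<in> {[[1,2,3,6],[4,7,8,9],[5,10,11,12]], [[1,2,5,7],[3,4,8,9],[6,10,11,12]],
                  [[1,2,3,5],[4,6,7,8],[9,10,11,12]], [[1,2,5,7],[3,6,8,9],[4,10,11,12]]}"
  shows "tb xs \<in> YT g r d \<alpha> \<beta>"
proof -
  have e12: "{1..12::nat} = {1,2,3,4,5,6,7,8,9,10,11,12}" by (auto; presburger)
  have img: "tb xs ` RS = {1..12}"
    using xs unfolding RS_expl e12 by (auto simp: tb_def RS_expl)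
  have inj: "inj_on (tb xs) RS"
    using xs unfolding RS_expl inj_on_def by (auto simp: tb_def RS_expl)
  have z: "\<forall>x. x \<notin> RS \<longrightarrow> tb xs x = 0" by (auto simp: tb_def)
  have rw: "\<forall>i j j'. (i, j) \<in> RS \<longrightarrow> (i, j') \<in> RS \<longrightarrow> j < j' \<longrightarrow> tb xs (i, j) < tb xs (i, j')"
    using xs unfolding RS_expl by (auto simp: tb_def RS_expl)
  have cl: "\<forall>i i' j. (i, j) \<in> RS \<longrightarrow> (i', j) \<in> RS \<longrightarrow> i < i' \<longrightarrow> tb xs (i, j) < tb xs (i', j)"
    using xs unfolding RS_expl by (auto simp: tb_def RS_expl)
  show ?thesis unfolding YT_def Let_def S bij_betw_def using img inj z rw cl g by simp
qed

lemma tb_val: "(k, c) \<in> RS \<Longrightarrow> tb xs (k, c) = xs ! (k - 1) ! (nat c - 1)"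
  by (simp add: tb_def)

lemma rect_case:
  assumes S: "skew g r d \<alpha> \<beta> = RS" and g: "g = 12"
  shows "\<exists>t a. 1 \<le> t \<and> t < g \<and> a > 0 \<and> pi_ta t a \<in> EH_group g \<and>
           (\<exists>T \<in> YT g r d \<alpha> \<beta>. pi_ta t a T \<noteq> T) \<and>
           4 * card {T \<in> YT g r d \<alpha> \<beta>. pi_ta t a T \<noteq> T} \<le> card (YT g r d \<alpha> \<beta>)"
proof (rule finish[of g r d \<alpha> \<beta> "\<lambda>_. 5" "\<lambda>i. 5 - int i"])
  show "finite (YT g r d \<alpha> \<beta>)" by (rule YT_finite) (simp add: S RS_def)
next
  fix i j T assume ij: "i < (4::nat)" "j < 4" "i \<noteq> j" and T: "T \<in> YT g r d \<alpha> \<beta>"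
    and m: "pi_ta 5 (5 - int i) T \<noteq> T" "pi_ta 5 (5 - int j) T \<noteq> T"
  have "5 - int i = 5 - int j" by (rule disj_fixed_t[OF T _ m]) simp
  then show False using ij by simp
next
  fix i :: nat assume i: "i < 4"
  have in_RS: "\<And>k c. (k, c) \<in> RS \<longleftrightarrow> k \<in> {1,2,3} \<and> c \<in> {1,2,3,4}" unfolding RS_def by auto
  have "\<exists>T\<in>YT g r d \<alpha> \<beta>. pi_ta 5 (5 - int i) T \<noteq> T"
  proof -
    have "i = 0 \<or> i = 1 \<or> i = 2 \<or> i = 3" using i by auto
    then show ?thesis
    proof (elim disjE)
      assume i0: "i = 0"
      let ?x = "[[1,2,3,6],[4,7,8,9],[5,10,11,12]] :: nat list list"
      have "tb ?x \<in> YT g r d \<alpha> \<beta>" by (rule tb_YT[OF S g]) simp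
      moreover have "pi_ta 5 5 (tb ?x) \<noteq> tb ?x"
        by (rule moved_intro[of _ "(3,1)" _ "(1,4)"]) (auto simp: tb_val in_RS box_dist_def)
      ultimately show ?thesis using i0 by auto
    next
      assume i0: "i = 1"
      let ?x = "[[1,2,5,7],[3,4,8,9],[6,10,11,12]] :: nat list list"
      have "tb ?x \<in> YT g r d \<alpha> \<beta>" by (rule tb_YT[OF S g]) simp
      moreover have "pi_ta 5 4 (tb ?x) \<noteq> tb ?x"
        by (rule moved_intro[of _ "(1,3)" _ "(3,1)"]) (auto simp: tb_val in_RS box_dist_def)
      ultimately show ?thesis using i0 by auto
    next
      assume i0: "i = 2"
      let ?x = "[[1,2,3,5],[4,6,7,8],[9,10,11,12]] :: nat list list"
      have "tb ?x \<in> YT g r d \<alpha> \<beta>" by (rule tb_YT[OF S g]) simp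
      moreover have "pi_ta 5 3 (tb ?x) \<noteq> tb ?x"
        by (rule moved_intro[of _ "(1,4)" _ "(2,2)"]) (auto simp: tb_val in_RS box_dist_def)
      ultimately show ?thesis using i0 by auto
    next
      assume i0: "i = 3"
      let ?x = "[[1,2,5,7],[3,6,8,9],[4,10,11,12]] :: nat list list"
      have "tb ?x \<in> YT g r d \<alpha> \<beta>" by (rule tb_YT[OF S g]) simp
      moreover have "pi_ta 5 2 (tb ?x) \<noteq> tb ?x"
        by (rule moved_intro[of _ "(1,3)" _ "(2,2)"]) (auto simp: tb_val in_RS box_dist_def)
      ultimately show ?thesis using i0 by auto
    qed
  qed
  then show "1 \<le> (5::nat) \<and> 5 < g \<and> 5 - int i > 0 \<and> (\<exists>T\<in>YT g r d \<alpha> \<beta>. pi_ta 5 (5 - int i) T \<noteq> T)"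
    using i g by auto
qed



context shp
begin

lemma caseB:
  assumes "\<not> (max (L 2 + 1) 2 + 2 < R 1)"
  shows "S = RS \<and> g = 12"
proof -
  have L2: "L 2 \<ge> 0" using Lnn by simp
  have rl2: "R 2 - L 2 \<ge> int r + 2" using rowlen[of 2] r2 by simp
  have R21: "R 2 \<le> R 1" using Rle[of 2] r2 by simp
  have L20: "L 2 = 0"
  proof (rule ccontr)
    assume "L 2 \<noteq> 0"
    then have "max (L 2 + 1) 2 = L 2 + 1" using L2 by simp
    then show False using assms rl2 R21 r2 by linarith
  qed
  then have "R 1 \<le> 4" using assms by simp
  then have rr: "r = 2" "R 1 = 4" "R 2 = 4" using rl2 R21 r2 L20 by linarith+
  have L1: "L 1 = 0" using rowlen[of 1] Lnn[of 1] rr by simp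
  have L3: "L 3 = 0" using Lr1 rr by simp
  have R3: "R 3 = 4" using rowlen[of 3] Rle[of 3] L3 rr by simp
  have cc: "\<And>c::int. c \<in> {1,2,3,4} \<longleftrightarrow> 0 < c \<and> c \<le> 4" by auto
  have "S = {(k, c). k \<in> {1,2,3} \<and> 0 < c \<and> c \<le> 4}"
    unfolding S_eq using rr L1 L20 L3 R3 by (auto simp: numeral_eq_Suc le_Suc_eq)
  also have "\<dots> = RS" unfolding RS_def using cc by auto
  finally have SR: "S = RS" .
  have "card RS = 12" unfolding RS_def by (simp add: card_cartesian_product)
  then show ?thesis using SR cardS by simp
qed

lemma caseA:
  assumes A: "max (L 2 + 1) 2 + 2 < R 1"
  shows "\<exists>t a. 1 \<le> t \<and> t < g \<and> a > 0 \<and> pi_ta t a \<in> EH_group g \<and>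
           (\<exists>T \<in> YT g r d \<alpha> \<beta>. pi_ta t a T \<noteq> T) \<and>
           4 * card {T \<in> YT g r d \<alpha> \<beta>. pi_ta t a T \<noteq> T} \<le> card (YT g r d \<alpha> \<beta>)"
proof -
  define c0 where "c0 = max (L 2 + 1) 2"
  define bb where "bb j = c0 - 1 + int j" for j :: nat
  define tt where "tt j = card (G0 (bb j)) + 1" for j :: nat
  have L2: "L 2 \<ge> 0" using Lnn by simp
  have rl2: "R 2 - L 2 \<ge> int r + 2" using rowlen[of 2] r2 by simp
  have c0: "c0 \<ge> 2" "c0 > L 2" "c0 \<le> L 2 + 2" unfolding c0_def using L2 by auto
  have inS: "(2, c0 + int j) \<in> S" if "j \<le> 2" for j
    unfolding S_eq using that c0 rl2 r2 by auto
  have strict: "tt j < tt (Suc j)" if "j \<le> 2" for j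
  proof -
    have sub: "G0 (bb j) \<subseteq> G0 (bb (Suc j))" by (rule G0_mono) (simp add: bb_def)
    have "grp (bb (Suc j)) (2, c0 + int j) = 0"
      using grp_mid[of 2 "bb (Suc j)" "c0 + int j"] r2 by (simp add: bb_def)
    then have "(2, c0 + int j) \<in> G0 (bb (Suc j))" using inS[OF that] by (simp add: G0_def)
    moreover have "grp (bb j) (2, c0 + int j) = 3"
      using grp_mid[of 2 "bb j" "c0 + int j"] r2 c0 by (simp add: bb_def)
    then have "(2, c0 + int j) \<notin> G0 (bb j)" by (simp add: G0_def)
    ultimately have "G0 (bb j) \<subset> G0 (bb (Suc j))" using sub by blast
    moreover have "finite (G0 (bb (Suc j)))" unfolding G0_def using finS by simp
    ultimately show ?thesis unfolding tt_def by (simp add: psubset_card_mono)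
  qed
  have s0: "tt 0 < tt 1" and s1: "tt 1 < tt 2" and s2: "tt 2 < tt 3"
    using strict[of 0] strict[of 1] strict[of 2] by (simp_all add: numeral_eq_Suc)
  have distinct: "tt i \<noteq> tt j" if "i < 4" "j < 4" "i \<noteq> j" for i j
  proof -
    have "i \<in> {0,1,2,3}" "j \<in> {0,1,2,3}" using that by auto
    then show ?thesis using that s0 s1 s2 by auto
  qed
  have bbR: "bb i < R 1" if "i < 4" for i
    using that A unfolding bb_def c0_def by simp
  have Dpos: "Dd > 0" unfolding Dd_def using R1ge by simp
  show ?thesis
  proof (rule finish[of g r d \<alpha> \<beta> tt "\<lambda>_. Dd"])
    show "finite (YT g r d \<alpha> \<beta>)" by (rule YT_finite[OF finS])
  next
    fix i j T assume ij: "i < (4::nat)" "j < 4" "i \<noteq> j" and T: "T \<in> YT g r d \<alpha> \<beta>"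
      and m: "pi_ta (tt i) Dd T \<noteq> T" "pi_ta (tt j) Dd T \<noteq> T"
    have "tt i = tt j" by (rule D_disj[OF T _ _ m]) (simp_all add: tt_def)
    then show False using distinct[OF ij] by simp
  next
    fix i :: nat assume i: "i < 4"
    have Y: "tab (bb i) \<in> YT g r d \<alpha> \<beta>" by (rule tab_YT[OF bbR[OF i]])
    then have "bij_betw (tab (bb i)) S {1..g}" unfolding YT_def Let_def by simp
    then have "tab (bb i) Qb \<in> {1..g}" using Q_in bij_betwE by blast
    then have "tt i < g" using tabQ[of "bb i"] unfolding tt_def by simp
    moreover have "pi_ta (tt i) Dd (tab (bb i)) \<noteq> tab (bb i)"
      unfolding tt_def by (rule tab_moved)
    ultimately show "1 \<le> tt i \<and> tt i < g \<and> Dd > 0 \<and> (\<exists>T\<in>YT g r d \<alpha> \<beta>. pi_ta (tt i) Dd T \<noteq> T)"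
      using Y Dpos by (auto simp: tt_def)
  qed
qed

end


theorem lemma4p4:
  fixes g r d :: nat and \<alpha> \<beta> :: "nat \<Rightarrow> nat"
  assumes "is_ram_seq r d \<alpha>" and "is_ram_seq r d \<beta>"
    and "int g - int d + int r \<ge> 0"
    and "rho g r d \<alpha> \<beta> = 0"
    and "r \<ge> 2"
    and "int (\<alpha> r) + int (\<beta> r) + int g - int d + int r > int r + 1"
  shows "\<exists>t a. 1 \<le> t \<and> t < g \<and> a > 0 \<and> pi_ta t a \<in> EH_group g \<and>
           (\<exists>T \<in> YT g r d \<alpha> \<beta>. pi_ta t a T \<noteq> T) \<and>
           4 * card {T \<in> YT g r d \<alpha> \<beta>. pi_ta t a T \<noteq> T} \<le> card (YT g r d \<alpha> \<beta>)"
proof -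
  interpret shp g r d \<alpha> \<beta> using assms by (unfold_locales) auto
  show ?thesis
  proof (cases "max (L 2 + 1) 2 + 2 < R 1")
    case True then show ?thesis by (rule caseA)
  next
    case False
    then have "S = RS \<and> g = 12" by (rule caseB)
    then show ?thesis using rect_case by blast
  qed
qed

end
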